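(* Let $(X,d)$ be a metric space with $|X|\geqslant 3$ in which every point is an accumulation point, and let $T\colon X\to X$ be a continuous generalized Ćirić–Reich–Rus type mapping with constants $\alpha,\lambda\geqslant 0$, $2\alpha+\frac{3\lambda}{2}<1$, i.e. $$d(Tx,Ty)+d(Ty,Tz)+d(Tx,Tz)\leqslant \alpha\big(d(x,y)+d(y,z)+d(z,x)\big)+\lambda\big(d(x,Tx)+d(y,Ty)+d(z,Tz)\big)$$ for all pairwise distinct $x,y,z\in X$. Then $T$ is a Ćirić–Reich–Rus type mapping with $b=c$, i.e. there exist $a,b\geqslant 0$ with $a+2b<1$ such that $$d(Tx,Ty)\leqslant a\,d(x,y)+b\,d(x,Tx)+b\,d(y,Ty)\quad\text{for all } x,y\in X.$$ *)

theory Defs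
  imports "HOL-Analysis.Analysis"
begin

end

theory Submission
  imports Defs
begin

lemma key_ineq:
  fixes T :: "'a::metric_space \<Rightarrow> 'a" and \<alpha> lam :: real
  assumes accum: "\<And>x::'a. x islimpt UNIV"
    and cont: "continuous_on UNIV T"
    and gcrr: "\<And>x y z. x \<noteq> y \<Longrightarrow> y \<noteq> z \<Longrightarrow> x \<noteq> z \<Longrightarrow>
        dist (T x) (T y) + dist (T y) (T z) + dist (T x) (T z)
        \<le> \<alpha> * (dist x y + dist y z + dist z x)
           + lam * (dist x (T x) + dist y (T y) + dist z (T z))"
    and xy: "x \<noteq> y"
  shows "dist (T x) (T y) + dist (T y) (T x) + dist (T x) (T x)
        \<le> \<alpha> * (dist x y + dist y x + dist x x)
           + lam * (dist x (T x) + dist y (T y) + dist x (T x))"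
proof -
  have nb: "at x \<noteq> bot" using accum[of x] trivial_limit_within[of x UNIV] by simp
  have iT: "(T \<longlongrightarrow> T x) (at x)"
    using cont continuous_on_eq_continuous_at[of UNIV T] isCont_def by auto
  have iz: "((\<lambda>z. z) \<longlongrightarrow> x) (at x)" by (rule tendsto_ident_at)
  have ev: "eventually (\<lambda>z. z \<noteq> y \<and> z \<noteq> x) (at x)"
  proof -
    have "dist x y > 0" using xy by simp
    then show ?thesis unfolding eventually_at
      by (intro exI[of _ "dist x y"] conjI ballI impI) (auto simp: dist_commute)
  qed
  show ?thesis
  proof (rule tendsto_le[OF nb])
    show "((\<lambda>z. \<alpha> * (dist x y + dist y z + dist z x)
           + lam * (dist x (T x) + dist y (T y) + dist z (T z))) \<longlongrightarrow>
          \<alpha> * (dist x y + dist y x + dist x x)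
           + lam * (dist x (T x) + dist y (T y) + dist x (T x))) (at x)"
      by (intro tendsto_intros iT iz)
    show "((\<lambda>z. dist (T x) (T y) + dist (T y) (T z) + dist (T x) (T z)) \<longlongrightarrow>
          dist (T x) (T y) + dist (T y) (T x) + dist (T x) (T x)) (at x)"
      by (intro tendsto_intros iT iz)
    show "eventually (\<lambda>z. dist (T x) (T y) + dist (T y) (T z) + dist (T x) (T z)
        \<le> \<alpha> * (dist x y + dist y z + dist z x)
           + lam * (dist x (T x) + dist y (T y) + dist z (T z))) (at x)"
      using ev by eventually_elim (rule gcrr, use xy in auto)
  qed
qed

theorem corollary2p6:
  fixes T :: "'a::metric_space \<Rightarrow> 'a" and \<alpha> lam :: real
  assumes three: "\<exists>x y z::'a. x \<noteq> y \<and> y \<noteq> z \<and> x \<noteq> z"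
    and accum: "\<And>x::'a. x islimpt UNIV"
    and cont: "continuous_on UNIV T"
    and alpha_nonneg: "\<alpha> \<ge> 0" and lambda_nonneg: "lam \<ge> 0"
    and small: "2 * \<alpha> + 3 * lam / 2 < 1"
    and gcrr: "\<And>x y z. x \<noteq> y \<Longrightarrow> y \<noteq> z \<Longrightarrow> x \<noteq> z \<Longrightarrow>
        dist (T x) (T y) + dist (T y) (T z) + dist (T x) (T z)
        \<le> \<alpha> * (dist x y + dist y z + dist z x)
           + lam * (dist x (T x) + dist y (T y) + dist z (T z))"
  shows "\<exists>a b::real. a \<ge> 0 \<and> b \<ge> 0 \<and> a + 2 * b < 1 \<and>
           (\<forall>x y. dist (T x) (T y) \<le> a * dist x y + b * dist x (T x) + b * dist y (T y))"
proof (intro exI conjI allI)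
  show "\<alpha> \<ge> 0" "3 * lam / 4 \<ge> 0" "\<alpha> + 2 * (3 * lam / 4) < 1"
    using alpha_nonneg lambda_nonneg small by auto
  fix x y
  show "dist (T x) (T y) \<le> \<alpha> * dist x y + 3 * lam / 4 * dist x (T x) + 3 * lam / 4 * dist y (T y)"
  proof (cases "x = y")
    case True
    then show ?thesis using alpha_nonneg lambda_nonneg by simp
  next
    case False
    note h1 = key_ineq[OF accum cont gcrr False]
    have yx: "y \<noteq> x" using False by auto
    note h2 = key_ineq[OF accum cont gcrr yx]
    show ?thesis using h1 h2 by (simp add: dist_commute algebra_simps)

  qed
qed

end
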